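(* There exists a strongly oriented graph $D$ such that $\overrightarrow{hn}_{g}(D)=m(D)-n(D)$, where $n(D)$ and $m(D)$ denote the numbers of vertices and arcs of $D$.
   Context: An oriented graph is a digraph obtained from a finite simple graph by orienting each edge in exactly one direction. It is strongly oriented if for every ordered pair $u,v$ of distinct vertices there is a directed path from $u$ to $v$. The geodetic interval function $I_g$ assigns to $(u,v)$ the set of vertices on some shortest directed $(u,v)$-path or some shortest directed $(v,u)$-path. For $S\subseteq V(D)$, $I_g(S)=\bigcup_{u,v\in S}I_g(u,v)$; $C$ is convex if $I_g(C)=C$; the convex hull of $S$ is the smallest convex set containing $S$. A hull set is a set whose convex hull is $V(D)$, and $\overrightarrow{hn}_{g}(D)$ is the minimum size of a hull set. *)

theory Defs
  imports Main
begin

definition oriented_graph :: "'a set \<Rightarrow> ('a \<times> 'a) set \<Rightarrow> bool" where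
  "oriented_graph V A \<longleftrightarrow> finite V \<and> V \<noteq> {} \<and> A \<subseteq> V \<times> V
     \<and> (\<forall>v. (v, v) \<notin> A) \<and> (\<forall>u v. (u, v) \<in> A \<longrightarrow> (v, u) \<notin> A)"

definition strongly_oriented :: "'a set \<Rightarrow> ('a \<times> 'a) set \<Rightarrow> bool" where
  "strongly_oriented V A \<longleftrightarrow> oriented_graph V A
     \<and> (\<forall>u\<in>V. \<forall>v\<in>V. u \<noteq> v \<longrightarrow> (u, v) \<in> A\<^sup>+)"

definition dipath :: "('a \<times> 'a) set \<Rightarrow> 'a list \<Rightarrow> 'a \<Rightarrow> 'a \<Rightarrow> bool" where
  "dipath A p u v \<longleftrightarrow> p \<noteq> [] \<and> hd p = u \<and> last p = v \<and> distinct p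
     \<and> (\<forall>i. Suc i < length p \<longrightarrow> (p ! i, p ! Suc i) \<in> A)"

definition shortest_dipath :: "('a \<times> 'a) set \<Rightarrow> 'a list \<Rightarrow> 'a \<Rightarrow> 'a \<Rightarrow> bool" where
  "shortest_dipath A p u v \<longleftrightarrow> dipath A p u v
     \<and> (\<forall>q. dipath A q u v \<longrightarrow> length p \<le> length q)"

definition geo_interval :: "('a \<times> 'a) set \<Rightarrow> 'a \<Rightarrow> 'a \<Rightarrow> 'a set" where
  "geo_interval A u v = {w. \<exists>p. (shortest_dipath A p u v \<or> shortest_dipath A p v u) \<and> w \<in> set p}"

definition geo_interval_set :: "('a \<times> 'a) set \<Rightarrow> 'a set \<Rightarrow> 'a set" where
  "geo_interval_set A S = (\<Union>u\<in>S. \<Union>v\<in>S. geo_interval A u v)"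

definition geo_convex :: "('a \<times> 'a) set \<Rightarrow> 'a set \<Rightarrow> bool" where
  "geo_convex A C \<longleftrightarrow> geo_interval_set A C = C"

definition geo_convex_hull :: "'a set \<Rightarrow> ('a \<times> 'a) set \<Rightarrow> 'a set \<Rightarrow> 'a set" where
  "geo_convex_hull V A S = \<Inter> {C. C \<subseteq> V \<and> S \<subseteq> C \<and> geo_convex A C}"

definition hull_set :: "'a set \<Rightarrow> ('a \<times> 'a) set \<Rightarrow> 'a set \<Rightarrow> bool" where
  "hull_set V A S \<longleftrightarrow> S \<subseteq> V \<and> geo_convex_hull V A S = V"

definition hull_number :: "'a set \<Rightarrow> ('a \<times> 'a) set \<Rightarrow> nat" where
  "hull_number V A = Min {card S | S. hull_set V A S}"

end

theory Submission
  imports Defs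
begin

lemma dipath_len1: "dipath A p u v \<Longrightarrow> length p \<ge> 1"
  by (cases p) (auto simp: dipath_def)

lemma dipath_single: "dipath A [u] u u"
  by (simp add: dipath_def)

lemma shortest_single: "shortest_dipath A [u] u u"
  using dipath_len1 by (fastforce simp: shortest_dipath_def dipath_single)

lemma shortest_uu: "shortest_dipath A p u u \<Longrightarrow> p = [u]"
proof -
  assume h: "shortest_dipath A p u u"
  then have "length p \<le> 1" using dipath_single unfolding shortest_dipath_def by fastforce
  moreover have "p \<noteq> []" "hd p = u" using h by (auto simp: shortest_dipath_def dipath_def)
  ultimately show ?thesis by (cases p) auto
qed

lemma interval_uu: "geo_interval A u u = {u}"
  unfolding geo_interval_def using shortest_uu shortest_single by fastforce

lemma convex_single: "geo_convex A {u}"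
  by (simp add: geo_convex_def geo_interval_set_def interval_uu)

lemma convex_empty: "geo_convex A {}"
  by (simp add: geo_convex_def geo_interval_set_def)

lemma dipath_in_V:
  assumes "dipath A p u v" "u \<in> V" "A \<subseteq> V \<times> V"
  shows "set p \<subseteq> V"
proof
  fix w assume "w \<in> set p"
  then obtain i where i: "i < length p" "p ! i = w" by (auto simp: in_set_conv_nth)
  show "w \<in> V"
  proof (cases i)
    case 0
    then show ?thesis using assms i by (cases p) (auto simp: dipath_def)
  next
    case (Suc j)
    then have "(p ! j, p ! i) \<in> A" using assms i by (auto simp: dipath_def)
    then show ?thesis using assms i by auto
  qed
qed

lemma convex_V:
  assumes "A \<subseteq> V \<times> V"
  shows "geo_convex A V"
proof -
  have "geo_interval A u v \<subseteq> V" if "u \<in> V" "v \<in> V" for u v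
  proof
    fix w assume "w \<in> geo_interval A u v"
    then obtain p where p: "dipath A p u v \<or> dipath A p v u" "w \<in> set p"
      unfolding geo_interval_def shortest_dipath_def by blast
    from p(1) show "w \<in> V"
    proof
      assume "dipath A p u v" then show ?thesis using dipath_in_V[OF _ _ assms] that p(2) by blast
    next
      assume "dipath A p v u" then show ?thesis using dipath_in_V[OF _ _ assms] that p(2) by blast
    qed
  qed
  then have "geo_interval_set A V \<subseteq> V"
    unfolding geo_interval_set_def by (intro UN_least) auto
  moreover have "V \<subseteq> geo_interval_set A V"
    unfolding geo_interval_set_def
  proof
    fix x assume "x \<in> V"
    then show "x \<in> (\<Union>u\<in>V. \<Union>v\<in>V. geo_interval A u v)"
      by (intro UN_I[of x]) (auto simp: interval_uu)
  qed
  ultimately show ?thesis unfolding geo_convex_def by (rule equalityI)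
qed

lemma hull_sub: "C \<subseteq> V \<Longrightarrow> S \<subseteq> C \<Longrightarrow> geo_convex A C \<Longrightarrow> geo_convex_hull V A S \<subseteq> C"
  unfolding geo_convex_hull_def by blast

definition AA :: "(nat \<times> nat) set" where
  "AA = {(0,1),(1,2),(2,3),(3,0),(0,2),(1,3)}"

definition VV :: "nat set" where "VV = {0,1,2,3}"

lemma len_ge3:
  assumes "dipath AA q 0 3"
  shows "3 \<le> length q"
proof (rule ccontr)
  assume "\<not> 3 \<le> length q"
  then have "length q = 1 \<or> length q = 2" using dipath_len1[OF assms] by auto
  then show False
  proof
    assume "length q = 1"
    then obtain a where "q = [a]" by (cases q) auto
    then show False using assms by (auto simp: dipath_def)
  next
    assume "length q = 2"
    then obtain a b where "q = [a,b]"
      by (cases q; cases "tl q") auto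
    then show False using assms by (auto simp: dipath_def AA_def)
  qed
qed

lemma sp1: "shortest_dipath AA [0,1,3] 0 3"
proof -
  have "dipath AA [0,1,3] 0 3" unfolding dipath_def AA_def by (auto simp: less_Suc_eq)
  then show ?thesis unfolding shortest_dipath_def using len_ge3 by fastforce
qed

lemma sp2: "shortest_dipath AA [0,2,3] 0 3"
proof -
  have "dipath AA [0,2,3] 0 3" unfolding dipath_def AA_def by (auto simp: less_Suc_eq)
  then show ?thesis unfolding shortest_dipath_def using len_ge3 by fastforce
qed

lemma int03: "VV \<subseteq> geo_interval AA 0 3"
proof -
  have "set [0,1,3] \<subseteq> geo_interval AA 0 3" "set [0,2,3] \<subseteq> geo_interval AA 0 3"
    unfolding geo_interval_def using sp1 sp2 by blast+
  then show ?thesis unfolding VV_def by auto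
qed

lemma og: "oriented_graph VV AA"
  by (auto simp: oriented_graph_def VV_def AA_def)

lemma AAsub: "AA \<subseteq> VV \<times> VV"
  by (auto simp: VV_def AA_def)

lemma hull03: "hull_set VV AA {0,3}"
proof -
  have "\<And>C. C \<subseteq> VV \<Longrightarrow> {0,3} \<subseteq> C \<Longrightarrow> geo_convex AA C \<Longrightarrow> C = VV"
  proof -
    fix C assume c: "C \<subseteq> VV" "{0,3} \<subseteq> C" "geo_convex AA C"
    have "geo_interval AA 0 3 \<subseteq> geo_interval_set AA C"
      using c(2) unfolding geo_interval_set_def by blast
    then show "C = VV" using c int03 unfolding geo_convex_def by auto
  qed
  moreover have "VV \<in> {C. C \<subseteq> VV \<and> {0,3} \<subseteq> C \<and> geo_convex AA C}"
    using convex_V[OF AAsub] by (auto simp: VV_def)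
  ultimately have "{C. C \<subseteq> VV \<and> {0,3} \<subseteq> C \<and> geo_convex AA C} = {VV}" by blast
  then show ?thesis by (simp add: hull_set_def geo_convex_hull_def VV_def)
qed

lemma not_small:
  assumes "hull_set VV AA S"
  shows "2 \<le> card S"
proof (rule ccontr)
  assume "\<not> 2 \<le> card S"
  then have c: "card S = 0 \<or> card S = 1" by auto
  have sub: "S \<subseteq> VV" and hv: "geo_convex_hull VV AA S = VV" using assms by (auto simp: hull_set_def)
  have fin: "finite S" using sub by (auto simp: VV_def intro: finite_subset)
  have cv: "geo_convex AA S"
    using c fin convex_empty convex_single by (auto simp: card_1_singleton_iff)
  have "geo_convex_hull VV AA S \<subseteq> S" using hull_sub[OF sub order_refl cv] .
  then have "VV \<subseteq> S" using hv by simp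
  then have "card VV \<le> card S" using fin card_mono by blast
  then show False using c by (simp add: VV_def)
qed

lemma hn: "hull_number VV AA = 2"
proof -
  have "{card S | S. hull_set VV AA S} \<subseteq> {2..card VV}"
  proof
    fix x assume "x \<in> {card S | S. hull_set VV AA S}"
    then obtain S where S: "x = card S" "hull_set VV AA S" by blast
    have "card S \<le> card VV" using S(2) by (intro card_mono) (auto simp: hull_set_def VV_def)
    then show "x \<in> {2..card VV}" using S not_small by auto
  qed
  then have f: "finite {card S | S. hull_set VV AA S}" by (rule finite_subset) simp
  have m: "2 \<in> {card S | S. hull_set VV AA S}" using hull03 by force
  show ?thesis unfolding hull_number_def
    using f m not_small by (intro antisym Min_le) (auto intro!: Min.boundedI)
qed

lemma strong: "strongly_oriented VV AA"
proof -
  have e: "(0,1) \<in> AA" "(1,2) \<in> AA" "(2,3) \<in> AA" "(3,0) \<in> AA" by (auto simp: AA_def)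
  have "\<forall>u\<in>VV. \<forall>v\<in>VV. (u, v) \<in> AA\<^sup>+"
  proof -
    have a: "(0,1) \<in> AA\<^sup>+" "(1,2) \<in> AA\<^sup>+" "(2,3) \<in> AA\<^sup>+" "(3,0) \<in> AA\<^sup>+"
      using e by auto
    have b: "(0,2) \<in> AA\<^sup>+" "(1,3) \<in> AA\<^sup>+" "(2,0) \<in> AA\<^sup>+" "(3,1) \<in> AA\<^sup>+"
      using a by (meson trancl_trans)+
    have c: "(0,3) \<in> AA\<^sup>+" "(1,0) \<in> AA\<^sup>+" "(2,1) \<in> AA\<^sup>+" "(3,2) \<in> AA\<^sup>+"
      using a b by (meson trancl_trans)+
    have d: "(0,0) \<in> AA\<^sup>+" "(1,1) \<in> AA\<^sup>+" "(2,2) \<in> AA\<^sup>+" "(3,3) \<in> AA\<^sup>+"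
      using a c by (meson trancl_trans)+
    show ?thesis unfolding VV_def using a b c d by simp
  qed
  then show ?thesis using og by (simp add: strongly_oriented_def)
qed

theorem corollary2:
  shows "\<exists>(V :: nat set) (A :: (nat \<times> nat) set). strongly_oriented V A
           \<and> int (hull_number V A) = int (card A) - int (card V)"
proof -
  have "card AA = 6" by (simp add: AA_def)
  moreover have "card VV = 4" by (simp add: VV_def)
  ultimately show ?thesis using strong hn by (intro exI[of _ VV] exI[of _ AA]) simp
qed

end
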